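(* Let $M(n,h)=\frac{2n+2-2\lceil 2\sqrt{n+h}\,\rceil}{4}$ and, for $h\ge1$, $m(h)=\min\{n\ge1: M(n,h)\ge h\}$. Then for every $h\ge 1$, $M(m(h),h)=h$. Furthermore, if $0\le \alpha-(m(h)+h)<3$ for some number $\alpha$ of the form $N^2$ or $N(N+1)$ with $N$ a positive integer, then $m(h+1)=m(h)+3$; otherwise $m(h+1)=m(h)+2$.
   Context: Here $M$ and $m$ are purely numerical functions as defined in the claim. *)

theory Defs
  imports Complex_Main
begin

definition M :: "nat \<Rightarrow> nat \<Rightarrow> real" where
  "M n h = (2 * real n + 2 - 2 * real_of_int \<lceil>2 * sqrt (real n + real h)\<rceil>) / 4"

definition m :: "nat \<Rightarrow> nat" where
  "m h = (LEAST n. n \<ge> 1 \<and> M n h \<ge> real h)"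

end

theory Submission imports Defs begin

definition rr :: "nat \<Rightarrow> nat" where "rr h = (LEAST r. 12*h \<le> r^2)"

lemma rr_ge: "12*h \<le> (rr h)^2"
  unfolding rr_def by (rule LeastI[of _ "12*h"]) (simp add: power2_eq_square)

lemma rr_min: "r < rr h \<Longrightarrow> r^2 < 12*h"
  unfolding rr_def using not_less_Least by force

lemma rr_ge4: assumes "h \<ge> 1" shows "rr h \<ge> 4"
proof (rule ccontr)
  assume "\<not> ?thesis" then have "rr h \<le> 3" by simp
  then have "(rr h)^2 \<le> 3^2" by (rule power_mono) simp
  with rr_ge[of h] assms show False by simp
qed

lemma ceil_le_iff2:
  fixes k :: int assumes "k \<ge> 0"
  shows "(\<lceil>2 * sqrt (real s)\<rceil> \<le> k) \<longleftrightarrow> 4 * int s \<le> k^2"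
proof -
  have "(\<lceil>2 * sqrt (real s)\<rceil> \<le> k) \<longleftrightarrow> sqrt (4 * real s) \<le> sqrt (real_of_int (k^2))"
    using assms by (simp add: ceiling_le_iff real_sqrt_mult)
  also have "\<dots> \<longleftrightarrow> 4 * real s \<le> real_of_int (k^2)" by (rule real_sqrt_le_iff)
  also have "\<dots> \<longleftrightarrow> 4 * int s \<le> k^2"
    by (metis of_int_le_iff of_int_mult of_int_numeral of_int_of_nat_eq)
  finally show ?thesis .
qed

lemma M_ge_iff:
  "M n h \<ge> real h \<longleftrightarrow> (int n + 1 - 2*int h \<ge> 0 \<and> 4*(int n + int h) \<le> (int n + 1 - 2*int h)^2)"
proof -
  have "sqrt (real (n+h)) \<ge> 0" by (rule real_sqrt_ge_zero) simp
  then have c0: "\<lceil>2 * sqrt (real (n+h))\<rceil> \<ge> 0" by (simp only: zero_le_ceiling)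
  let ?c = "\<lceil>2 * sqrt (real (n+h))\<rceil>"
  have "M n h \<ge> real h \<longleftrightarrow> real_of_int ?c \<le> real_of_int (int n + 1 - 2*int h)"
    unfolding M_def by (simp add: field_simps) linarith
  then have "M n h \<ge> real h \<longleftrightarrow> ?c \<le> int n + 1 - 2*int h"
    by (simp only: of_int_le_iff)
  note iff = this
  show ?thesis
  proof (cases "int n + 1 - 2*int h \<ge> 0")
    case True
    then show ?thesis using ceil_le_iff2[of "int n + 1 - 2*int h" "n+h"] iff by simp
  next
    case False
    then show ?thesis using c0 iff by linarith
  qed
qed

lemma m_eq: assumes "h \<ge> 1" shows "m h = 2*h + 1 + rr h"
  unfolding m_def
proof (rule Least_equality)
  have "12*int h \<le> int (rr h)^2" using rr_ge[of h] by (metis of_nat_le_iff of_nat_mult of_nat_numeral of_nat_power)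
  then show "1 \<le> 2*h + 1 + rr h \<and> real h \<le> M (2*h + 1 + rr h) h"
    unfolding M_ge_iff by (simp add: algebra_simps power2_eq_square)
next
  fix n assume "1 \<le> n \<and> real h \<le> M n h"
  then have k0: "int n + 1 - 2*int h \<ge> 0" and k1: "4*(int n + int h) \<le> (int n + 1 - 2*int h)^2"
    unfolding M_ge_iff by auto
  define k where "k = int n + 1 - 2*int h"
  have "k \<ge> 2"
  proof (rule ccontr)
    assume "\<not> k \<ge> 2"
    then have "k = 0 \<or> k = 1" using k0 k_def by auto
    then have "k^2 \<le> 1" by auto
    moreover have "int n \<ge> 0" by simp
    moreover have "int h \<ge> 1" using assms by simp
    ultimately show False using k1 unfolding k_def[symmetric] by (smt (verit))
  qed
  have "12 * int h \<le> (k-2)^2" using k1 unfolding k_def[symmetric] by (simp add: k_def power2_eq_square algebra_simps)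
  moreover have "int ((nat (k-2))^2) = (k-2)^2" using \<open>k \<ge> 2\<close> by simp
  ultimately have "int (12 * h) \<le> int ((nat (k-2))^2)" by simp
  then have "12 * h \<le> (nat (k-2))^2" by (simp only: of_nat_le_iff)
  then have "\<not> nat (k-2) < rr h" using rr_min by (meson not_less)
  then show "n \<ge> 2*h + 1 + rr h" using \<open>k \<ge> 2\<close> k_def by linarith
qed

lemma rr_facts: assumes "h \<ge> 1"
  shows "int (rr h) \<ge> 4" "12 * int h \<le> int (rr h)^2" "int (rr h)^2 < 12 * int h + 2 * int (rr h) - 1"
proof -
  have r4: "rr h \<ge> 4" using rr_ge4 assms by simp
  then show "int (rr h) \<ge> 4" by simp
  show "12 * int h \<le> int (rr h)^2" using rr_ge[of h] by (metis of_nat_le_iff of_nat_mult of_nat_numeral of_nat_power)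
  have "(rr h - 1)^2 < 12 * h" using rr_min[of "rr h - 1" h] r4 by simp
  then have "int ((rr h - 1)^2) < int (12 * h)" by (simp only: of_nat_less_iff)
  moreover have "int ((rr h - 1)^2) = (int (rr h) - 1)^2" using r4 by (simp add: of_nat_diff)
  ultimately have "(int (rr h) - 1)^2 < 12 * int h" by simp
  then show "int (rr h)^2 < 12 * int h + 2 * int (rr h) - 1" by (simp add: power2_eq_square algebra_simps)
qed

lemma rr_succ: assumes "h \<ge> 1"
  shows "rr (h+1) = (if (rr h)^2 < 12*h+12 then rr h + 1 else rr h)"
proof (cases "(rr h)^2 < 12*h+12")
  case True
  have r4: "rr h \<ge> 4" using rr_ge4 assms by simp
  have ge: "12*h \<le> (rr h)^2" by (rule rr_ge)
  have "12*(h+1) \<le> (rr h + 1)^2"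
  proof (cases "rr h \<le> 5")
    case True
    then have "rr h = 4 \<or> rr h = 5" using r4 by auto
    then show ?thesis using ge by (elim disjE; simp; presburger)
  next
    case False
    then show ?thesis using ge by (simp add: power2_eq_square algebra_simps)
  qed
  moreover have "\<And>y. 12*(h+1) \<le> y^2 \<Longrightarrow> rr h + 1 \<le> y"
  proof -
    fix y :: nat assume y: "12*(h+1) \<le> y^2"
    show "rr h + 1 \<le> y"
    proof (rule ccontr)
      assume "\<not> ?thesis" then have "y \<le> rr h" by simp
      then have "y^2 \<le> (rr h)^2" by (rule power_mono) simp
      with y True show False by simp
    qed
  qed
  ultimately have "rr (h+1) = rr h + 1" unfolding rr_def[of "h+1"] by (intro Least_equality) auto
  with True show ?thesis by simp
next
  case False
  have "rr (h+1) = rr h" unfolding rr_def[of "h+1"]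
  proof (rule Least_equality)
    show "12*(h+1) \<le> (rr h)^2" using False by simp
  next
    fix y :: nat assume "12*(h+1) \<le> y^2"
    then have "\<not> y^2 < 12*h" by simp
    then show "rr h \<le> y" using rr_min[of y h] by (meson not_less)
  qed
  with False show ?thesis by simp
qed

lemma K_eq:
  fixes K R H :: int
  assumes "R \<ge> 4" "12*H \<le> R^2" "R^2 < 12*H + 2*R - 1" "K \<ge> 0"
    "12*H + 4*R + 4 \<le> K^2" "K^2 \<le> 12*H + 4*R + 13"
  shows "K = R + 2"
proof -
  have "\<not> K \<le> R + 1"
  proof
    assume "K \<le> R + 1"
    then have "K^2 \<le> (R+1)^2" using assms(4) by (rule power_mono)
    then show False using assms by (simp add: power2_eq_square algebra_simps)
  qed
  moreover have "\<not> K \<ge> R + 3"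
  proof
    assume "K \<ge> R + 3"
    then have "(R+3)^2 \<le> K^2" by (rule power_mono) (use assms in simp)
    then show False using assms by (simp add: power2_eq_square algebra_simps)
  qed
  ultimately show ?thesis by simp
qed

lemma cond_iff:
  assumes "h \<ge> 1"
  shows "(\<exists>N::nat. N \<ge> 1 \<and>
        (\<exists>\<alpha>::int. (\<alpha> = int N ^ 2 \<or> \<alpha> = int N * (int N + 1)) \<and>
           0 \<le> \<alpha> - int (m h + h) \<and> \<alpha> - int (m h + h) < 3))
     \<longleftrightarrow> (rr h)^2 < 12*h+12"
proof -
  define R where "R = int (rr h)"
  define H where "H = int h"
  have f: "R \<ge> 4" "12 * H \<le> R^2" "R^2 < 12 * H + 2 * R - 1"
    using rr_facts[OF assms] unfolding R_def H_def by auto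
  have s0: "int (m h + h) = 3*H + 1 + R" using m_eq[OF assms] unfolding R_def H_def by simp
  have goal: "(rr h)^2 < 12*h+12 \<longleftrightarrow> R^2 < 12*H + 12"
  proof -
    have "(rr h)^2 < 12*h+12 \<longleftrightarrow> int ((rr h)^2) < int (12*h+12)" by (simp only: of_nat_less_iff)
    then show ?thesis unfolding R_def H_def by simp
  qed
  show ?thesis unfolding goal s0
  proof
    assume "\<exists>N::nat. N \<ge> 1 \<and>
        (\<exists>\<alpha>::int. (\<alpha> = int N ^ 2 \<or> \<alpha> = int N * (int N + 1)) \<and>
           0 \<le> \<alpha> - (3*H + 1 + R) \<and> \<alpha> - (3*H + 1 + R) < 3)"
    then obtain N :: nat and \<alpha> :: int where
      a: "\<alpha> = int N ^ 2 \<or> \<alpha> = int N * (int N + 1)"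
      and b: "0 \<le> \<alpha> - (3*H + 1 + R)" "\<alpha> - (3*H + 1 + R) < 3" by blast
    from a show "R^2 < 12*H + 12"
    proof
      assume a1: "\<alpha> = int N ^ 2"
      define K where "K = 2 * int N"
      have Kq: "K^2 = 4 * \<alpha>" unfolding K_def a1 by (simp add: power2_eq_square)
      have "K = R + 2" by (rule K_eq[OF f]) (use Kq b K_def in auto)
      then show ?thesis using Kq b by (simp add: power2_eq_square algebra_simps)
    next
      assume a1: "\<alpha> = int N * (int N + 1)"
      define K where "K = 2 * int N + 1"
      have Kq: "K^2 = 4 * \<alpha> + 1" unfolding K_def a1 by (simp add: power2_eq_square algebra_simps)
      have "K = R + 2" by (rule K_eq[OF f]) (use Kq b K_def in auto)
      then show ?thesis using Kq b by (simp add: power2_eq_square algebra_simps)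
    qed
  next
    assume lt: "R^2 < 12*H + 12"
    have "R \<ge> 0" using f by simp
    show "\<exists>N::nat. N \<ge> 1 \<and>
        (\<exists>\<alpha>::int. (\<alpha> = int N ^ 2 \<or> \<alpha> = int N * (int N + 1)) \<and>
           0 \<le> \<alpha> - (3*H + 1 + R) \<and> \<alpha> - (3*H + 1 + R) < 3)"
    proof (cases "even R")
      case True
      then obtain J where J: "R = 2*J" by blast
      have J0: "J \<ge> 0" using J \<open>R \<ge> 0\<close> by simp
      have e: "4 * ((J+1)^2 - (3*H + 1 + R)) = R^2 - 12*H" unfolding J by (simp add: power2_eq_square algebra_simps)
      show ?thesis
      proof (intro exI conjI)
        show "1 \<le> nat (J+1)" using J0 by simp
        show "int (nat (J+1)) ^ 2 = int (nat (J+1)) ^ 2 \<or> int (nat (J+1)) ^ 2 = int (nat (J+1)) * (int (nat (J+1)) + 1)" by simp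
        show "0 \<le> int (nat (J+1)) ^ 2 - (3*H + 1 + R)" using e f J0 by simp
        show "int (nat (J+1)) ^ 2 - (3*H + 1 + R) < 3" using e lt J0 by simp
      qed
    next
      case False
      then obtain J where J: "R = 2*J + 1" by (metis oddE)
      have J0: "J \<ge> 0" using J f by simp
      have e: "4 * ((J+1)*((J+1)+1) - (3*H + 1 + R)) = R^2 - 1 - 12*H" unfolding J by (simp add: power2_eq_square algebra_simps)
      have ne: "R^2 \<noteq> 12*H"
      proof
        assume "R^2 = 12*H"
        then have "even (R^2)" by simp
        with False show False by simp
      qed
      show ?thesis
      proof (intro exI conjI)
        show "1 \<le> nat (J+1)" using J0 by simp
        show "int (nat (J+1)) * (int (nat (J+1)) + 1) = int (nat (J+1)) ^ 2 \<or> int (nat (J+1)) * (int (nat (J+1)) + 1) = int (nat (J+1)) * (int (nat (J+1)) + 1)" by simp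
        show "0 \<le> int (nat (J+1)) * (int (nat (J+1)) + 1) - (3*H + 1 + R)" using e f ne J0 by simp
        show "int (nat (J+1)) * (int (nat (J+1)) + 1) - (3*H + 1 + R) < 3" using e lt J0 by simp
      qed
    qed
  qed
qed

lemma M_m: assumes "h \<ge> 1" shows "M (m h) h = real h"
proof -
  define r where "r = rr h"
  have f: "int r \<ge> 4" "12 * int h \<le> int r^2" "int r^2 < 12 * int h + 2 * int r - 1"
    using rr_facts[OF assms] unfolding r_def by auto
  have mh: "m h = 2*h + 1 + r" using m_eq[OF assms] r_def by simp
  let ?c = "\<lceil>2 * sqrt (real (m h + h))\<rceil>"
  have c1: "?c \<le> int r + 2"
    by (subst ceil_le_iff2) (use f mh in \<open>auto simp: power2_eq_square algebra_simps\<close>)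
  have c2: "\<not> ?c \<le> int r + 1"
    by (subst ceil_le_iff2) (use f mh in \<open>auto simp: power2_eq_square algebra_simps\<close>)
  have "?c = int r + 2" using c1 c2 by simp
  then have "\<lceil>2 * sqrt (real (m h) + real h)\<rceil> = int r + 2" by simp
  then show ?thesis unfolding M_def mh by simp
qed

theorem lemma4:
  fixes h :: nat
  assumes "h \<ge> 1"
  shows "M (m h) h = real h \<and>
    ((\<exists>N::nat. N \<ge> 1 \<and>
        (\<exists>\<alpha>::int. (\<alpha> = int N ^ 2 \<or> \<alpha> = int N * (int N + 1)) \<and>
           0 \<le> \<alpha> - int (m h + h) \<and> \<alpha> - int (m h + h) < 3))
       \<longrightarrow> m (h + 1) = m h + 3) \<and>
    (\<not> (\<exists>N::nat. N \<ge> 1 \<and>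
        (\<exists>\<alpha>::int. (\<alpha> = int N ^ 2 \<or> \<alpha> = int N * (int N + 1)) \<and>
           0 \<le> \<alpha> - int (m h + h) \<and> \<alpha> - int (m h + h) < 3))
       \<longrightarrow> m (h + 1) = m h + 2)"
proof -
  have a1: "h + 1 \<ge> 1" by simp
  have "m (h+1) = 2*(h+1) + 1 + rr (h+1)" by (rule m_eq[OF a1])
  then have "m (h+1) = 2*h + 3 + (if (rr h)^2 < 12*h+12 then rr h + 1 else rr h)"
    using rr_succ[OF assms] by simp
  then show ?thesis using M_m[OF assms] cond_iff[OF assms] m_eq[OF assms] by auto
qed

end
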